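(* Let $L>0$, let $p_{\rm ext}\in\mathbb{R}$ be a constant, and let $\bar\ell:\mathcal{U}\to\mathbb{R}$ be a smooth function of four real variables, defined on an open set $\mathcal{U}\subset\mathbb{R}^4$ and written $\bar\ell=\bar\ell(A,A_t,A_s,u)$ (it does not depend explicitly on $s$ or $t$). Let $A,u,p$ be smooth real functions of $(s,t)\in(\mathbb{R}/L\mathbb{Z})\times I$, $I$ an open time interval, with $(A,A_t,A_s,u)(s,t)\in\mathcal{U}$, satisfying $$\partial_t \frac{\partial\bar\ell}{\partial u}+u\,\partial_s\frac{\partial\bar\ell}{\partial u}+2\frac{\partial\bar\ell}{\partial u}\,\partial_s u=-A\,\partial_s p,$$ $$\partial_t\frac{\partial\bar\ell}{\partial A_t}+\partial_s\frac{\partial\bar\ell}{\partial A_s}-\frac{\partial\bar\ell}{\partial A}=p-p_{\rm ext},$$ $$\partial_t A+\partial_s(Au)=0,$$ where all partial derivatives of $\bar\ell$ are evaluated at $(A(s,t),\partial_tA(s,t),\partial_sA(s,t),u(s,t))$. Then the quantity $$E(t)=\int_0^L\Big(\frac{\partial\bar\ell}{\partial A_t}\,\partial_tA+\frac{\partial\bar\ell}{\partial u}\,u-\bar\ell\Big)\,\mathrm{d}s$$ is independent of $t\in I$.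
   Context: This system models an inextensible, unshearable fluid-conveying tube with straight centerline: $s$ is the coordinate along the tube, $A(s,t)$ the cross-sectional area, $u(s,t)$ the fluid velocity, $p$ the fluid pressure (Lagrange multiplier for incompressibility), $p_{\rm ext}$ the external pressure, and $\bar\ell$ the Lagrangian density (with the swirl circulation frozen at a constant value). Periodic boundary conditions in $s$ are assumed. *)

theory Defs
  imports "HOL-Analysis.Analysis"
begin

fun dirderivs :: "'a::real_normed_vector list \<Rightarrow> ('a \<Rightarrow> real) \<Rightarrow> ('a \<Rightarrow> real)" where
  "dirderivs [] f = f"
| "dirderivs (v # vs) f = (\<lambda>x. frechet_derivative (dirderivs vs f) (at x) v)"

text \<open>C-infinity smoothness on an open set: every iterated directional derivative
  exists and is differentiable at every point of the set (hence all partial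
  derivatives of all orders exist and are continuous there).\<close>
definition smooth_on :: "'a::real_normed_vector set \<Rightarrow> ('a \<Rightarrow> real) \<Rightarrow> bool" where
  "smooth_on S f \<longleftrightarrow> (\<forall>vs. \<forall>x\<in>S. dirderivs vs f differentiable (at x))"

definition ds :: "(real \<Rightarrow> real \<Rightarrow> real) \<Rightarrow> real \<Rightarrow> real \<Rightarrow> real" where
  "ds f s t = deriv (\<lambda>\<sigma>. f \<sigma> t) s"

definition dt :: "(real \<Rightarrow> real \<Rightarrow> real) \<Rightarrow> real \<Rightarrow> real \<Rightarrow> real" where
  "dt f s t = deriv (\<lambda>\<tau>. f s \<tau>) t"

definition pdiff :: "('a::real_normed_vector \<Rightarrow> real) \<Rightarrow> 'a \<Rightarrow> 'a \<Rightarrow> real" where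
  "pdiff l v q = frechet_derivative l (at q) v"

type_synonym R4 = "real \<times> real \<times> real \<times> real"

abbreviation eA :: R4 where "eA \<equiv> (1, 0, 0, 0)"
abbreviation eAt :: R4 where "eAt \<equiv> (0, 1, 0, 0)"
abbreviation eAs :: R4 where "eAs \<equiv> (0, 0, 1, 0)"
abbreviation eu :: R4 where "eu \<equiv> (0, 0, 0, 1)"

end

theory Submission imports Defs begin


lemma dd_append: "dirderivs vs (dirderivs ws f) = dirderivs (vs @ ws) f"
  by (induction vs) auto

lemma smooth_dd: "smooth_on S f \<Longrightarrow> smooth_on S (dirderivs ws f)"
  unfolding smooth_on_def by (simp add: dd_append)

lemma smooth_diff: "smooth_on S f \<Longrightarrow> x \<in> S \<Longrightarrow> f differentiable (at x)"
  unfolding smooth_on_def by (metis dirderivs.simps(1))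

lemma smooth_cont: "smooth_on S f \<Longrightarrow> continuous_on S f"
  by (rule differentiable_imp_continuous_on)
     (auto simp: differentiable_on_def intro: differentiable_at_withinI smooth_diff)

lemma pair_ds:
  assumes "F differentiable (at (s,t))"
  shows "((\<lambda>\<sigma>. F (\<sigma>,t)) has_real_derivative frechet_derivative F (at (s,t)) (1,0)) (at s)"
proof -
  let ?D = "frechet_derivative F (at (s,t))"
  have D: "(F has_derivative ?D) (at (s,t))" using assms frechet_derivative_works by blast
  have lin: "linear ?D" using has_derivative_linear[OF D] .
  have P: "((\<lambda>\<sigma>. (\<sigma>,t)) has_derivative (\<lambda>h. (h,0))) (at s)"
    by (auto intro!: derivative_eq_intros)
  have "((\<lambda>\<sigma>. F (\<sigma>,t)) has_derivative (\<lambda>h. ?D (h,0))) (at s)"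
    using has_derivative_compose[OF P D] by simp
  moreover have "(\<lambda>h. ?D (h,0)) = (*) (?D (1,0))"
  proof
    fix h :: real
    have "(h,0::real) = h *\<^sub>R (1,0)" by simp
    then show "?D (h,0) = ?D (1,0) * h" using linear_scale[OF lin, of h "(1,0)"] by simp
  qed
  ultimately show ?thesis by (simp add: has_field_derivative_def)
qed

lemma pair_dt:
  assumes "F differentiable (at (s,t))"
  shows "((\<lambda>\<tau>. F (s,\<tau>)) has_real_derivative frechet_derivative F (at (s,t)) (0,1)) (at t)"
proof -
  let ?D = "frechet_derivative F (at (s,t))"
  have D: "(F has_derivative ?D) (at (s,t))" using assms frechet_derivative_works by blast
  have lin: "linear ?D" using has_derivative_linear[OF D] .
  have P: "((\<lambda>\<tau>. (s,\<tau>)) has_derivative (\<lambda>h. (0,h))) (at t)"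
    by (auto intro!: derivative_eq_intros)
  have "((\<lambda>\<tau>. F (s,\<tau>)) has_derivative (\<lambda>h. ?D (0,h))) (at t)"
    using has_derivative_compose[OF P D] by simp
  moreover have "(\<lambda>h. ?D (0,h)) = (*) (?D (0,1))"
  proof
    fix h :: real
    have "(0::real,h) = h *\<^sub>R (0,1)" by simp
    then show "?D (0,h) = ?D (0,1) * h" using linear_scale[OF lin, of h "(0,1)"] by simp
  qed
  ultimately show ?thesis by (simp add: has_field_derivative_def)
qed

definition C1 :: "real set \<Rightarrow> (real \<Rightarrow> real \<Rightarrow> real) \<Rightarrow> bool" where
  "C1 I f \<longleftrightarrow> (\<forall>s t. t \<in> I \<longrightarrow> ((\<lambda>\<sigma>. f \<sigma> t) has_real_derivative ds f s t) (at s)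
       \<and> ((\<lambda>\<tau>. f s \<tau>) has_real_derivative dt f s t) (at t))
     \<and> continuous_on (UNIV \<times> I) (\<lambda>x. f (fst x) (snd x))
     \<and> continuous_on (UNIV \<times> I) (\<lambda>x. ds f (fst x) (snd x))
     \<and> continuous_on (UNIV \<times> I) (\<lambda>x. dt f (fst x) (snd x))"

lemma ds_eq: "((\<lambda>\<sigma>. f \<sigma> t) has_real_derivative X) (at s) \<Longrightarrow> ds f s t = X"
  unfolding ds_def by (rule DERIV_imp_deriv)

lemma dt_eq: "((\<lambda>\<tau>. f s \<tau>) has_real_derivative X) (at t) \<Longrightarrow> dt f s t = X"
  unfolding dt_def by (rule DERIV_imp_deriv)

lemma C1_ds: "C1 I f \<Longrightarrow> t \<in> I \<Longrightarrow> ((\<lambda>\<sigma>. f \<sigma> t) has_real_derivative ds f s t) (at s)"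
  unfolding C1_def by blast
lemma C1_dt: "C1 I f \<Longrightarrow> t \<in> I \<Longrightarrow> ((\<lambda>\<tau>. f s \<tau>) has_real_derivative dt f s t) (at t)"
  unfolding C1_def by blast
lemma C1_cont: "C1 I f \<Longrightarrow> continuous_on (UNIV \<times> I) (\<lambda>x. f (fst x) (snd x))"
  unfolding C1_def by blast
lemma C1_cont_ds: "C1 I f \<Longrightarrow> continuous_on (UNIV \<times> I) (\<lambda>x. ds f (fst x) (snd x))"
  unfolding C1_def by blast
lemma C1_cont_dt: "C1 I f \<Longrightarrow> continuous_on (UNIV \<times> I) (\<lambda>x. dt f (fst x) (snd x))"
  unfolding C1_def by blast

lemma C1_intro:
  assumes "\<And>s t. t \<in> I \<Longrightarrow> ((\<lambda>\<sigma>. f \<sigma> t) has_real_derivative Fs s t) (at s)"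
    and "\<And>s t. t \<in> I \<Longrightarrow> ((\<lambda>\<tau>. f s \<tau>) has_real_derivative Ft s t) (at t)"
    and "continuous_on (UNIV \<times> I) (\<lambda>x. f (fst x) (snd x))"
    and "continuous_on (UNIV \<times> I) (\<lambda>x. Fs (fst x) (snd x))"
    and "continuous_on (UNIV \<times> I) (\<lambda>x. Ft (fst x) (snd x))"
  shows "C1 I f"
proof -
  have es: "ds f s t = Fs s t" if "t \<in> I" for s t by (rule ds_eq) (rule assms(1)[OF that])
  have et: "dt f s t = Ft s t" if "t \<in> I" for s t by (rule dt_eq) (rule assms(2)[OF that])
  show ?thesis unfolding C1_def
    using assms es et
    by (auto intro: continuous_on_eq[OF assms(4)] continuous_on_eq[OF assms(5)])
qed

lemma C1_of_smooth:
  assumes sm: "smooth_on (UNIV \<times> I) F" and I: "open I"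
    and eq: "\<And>s t. t \<in> I \<Longrightarrow> f s t = F (s,t)"
  shows "C1 I f"
    and "t \<in> I \<Longrightarrow> ds f s t = dirderivs [(1,0)] F (s,t)"
    and "t \<in> I \<Longrightarrow> dt f s t = dirderivs [(0,1)] F (s,t)"
proof -
  have S: "open (UNIV \<times> I)" using I by (simp add: open_Times)
  have ds1: "((\<lambda>\<sigma>. f \<sigma> t) has_real_derivative dirderivs [(1,0)] F (s,t)) (at s)" if "t \<in> I" for s t
  proof -
    have "((\<lambda>\<sigma>. F (\<sigma>,t)) has_real_derivative dirderivs [(1,0)] F (s,t)) (at s)"
      using pair_ds[OF smooth_diff[OF sm]] that by simp
    moreover have "(\<lambda>\<sigma>. F (\<sigma>,t)) = (\<lambda>\<sigma>. f \<sigma> t)" using eq that by auto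
    ultimately show ?thesis by simp
  qed
  have dt1: "((\<lambda>\<tau>. f s \<tau>) has_real_derivative dirderivs [(0,1)] F (s,t)) (at t)" if "t \<in> I" for s t
  proof -
    have "((\<lambda>\<tau>. F (s,\<tau>)) has_real_derivative dirderivs [(0,1)] F (s,t)) (at t)"
      using pair_dt[OF smooth_diff[OF sm]] that by simp
    then show ?thesis
      by (rule has_field_derivative_transform_within_open[OF _ I that]) (simp add: eq)
  qed
  have c0: "continuous_on (UNIV \<times> I) (\<lambda>x. f (fst x) (snd x))"
    by (rule continuous_on_eq[OF smooth_cont[OF sm]]) (auto simp: eq)
  have c1: "continuous_on (UNIV \<times> I) (\<lambda>x. dirderivs [(1,0)] F (fst x, snd x))"
    using smooth_cont[OF smooth_dd[OF sm, of "[(1,0)]"]] by simp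
  have c2: "continuous_on (UNIV \<times> I) (\<lambda>x. dirderivs [(0,1)] F (fst x, snd x))"
    using smooth_cont[OF smooth_dd[OF sm, of "[(0,1)]"]] by simp
  show "C1 I f" by (rule C1_intro[OF ds1 dt1 c0 c1 c2])
  show "t \<in> I \<Longrightarrow> ds f s t = dirderivs [(1,0)] F (s,t)" by (rule ds_eq) (rule ds1)
  show "t \<in> I \<Longrightarrow> dt f s t = dirderivs [(0,1)] F (s,t)" by (rule dt_eq) (rule dt1)
qed



lemma C1_const: "C1 I (\<lambda>s t. c)"
  by (rule C1_intro[where Fs="\<lambda>s t. 0" and Ft="\<lambda>s t. 0"]) (auto intro: continuous_intros)

lemma C1_mult:
  assumes f: "C1 I f" and g: "C1 I g"
  shows "C1 I (\<lambda>s t. f s t * g s t)"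
    and "t \<in> I \<Longrightarrow> ds (\<lambda>s t. f s t * g s t) s t = ds f s t * g s t + f s t * ds g s t"
    and "t \<in> I \<Longrightarrow> dt (\<lambda>s t. f s t * g s t) s t = dt f s t * g s t + f s t * dt g s t"
proof -
  have D1: "((\<lambda>\<sigma>. f \<sigma> t * g \<sigma> t) has_real_derivative ds f s t * g s t + f s t * ds g s t) (at s)"
    if "t \<in> I" for s t
    using DERIV_mult[OF C1_ds[OF f that] C1_ds[OF g that]] by (simp add: algebra_simps)
  have D2: "((\<lambda>\<tau>. f s \<tau> * g s \<tau>) has_real_derivative dt f s t * g s t + f s t * dt g s t) (at t)"
    if "t \<in> I" for s t
    using DERIV_mult[OF C1_dt[OF f that] C1_dt[OF g that]] by (simp add: algebra_simps)
  show "C1 I (\<lambda>s t. f s t * g s t)"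
    by (rule C1_intro[OF D1 D2], assumption, assumption,
       (intro continuous_on_add continuous_on_mult C1_cont[OF f] C1_cont[OF g]
          C1_cont_ds[OF f] C1_cont_ds[OF g] C1_cont_dt[OF f] C1_cont_dt[OF g])+)
  show "t \<in> I \<Longrightarrow> ds (\<lambda>s t. f s t * g s t) s t = ds f s t * g s t + f s t * ds g s t"
    by (rule ds_eq) (rule D1)
  show "t \<in> I \<Longrightarrow> dt (\<lambda>s t. f s t * g s t) s t = dt f s t * g s t + f s t * dt g s t"
    by (rule dt_eq) (rule D2)
qed

lemma C1_add:
  assumes f: "C1 I f" and g: "C1 I g"
  shows "C1 I (\<lambda>s t. f s t + g s t)"
    and "t \<in> I \<Longrightarrow> ds (\<lambda>s t. f s t + g s t) s t = ds f s t + ds g s t"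
    and "t \<in> I \<Longrightarrow> dt (\<lambda>s t. f s t + g s t) s t = dt f s t + dt g s t"
proof -
  have D1: "((\<lambda>\<sigma>. f \<sigma> t + g \<sigma> t) has_real_derivative ds f s t + ds g s t) (at s)"
    if "t \<in> I" for s t
    using DERIV_add[OF C1_ds[OF f that] C1_ds[OF g that]] by (simp add: algebra_simps)
  have D2: "((\<lambda>\<tau>. f s \<tau> + g s \<tau>) has_real_derivative dt f s t + dt g s t) (at t)"
    if "t \<in> I" for s t
    using DERIV_add[OF C1_dt[OF f that] C1_dt[OF g that]] by (simp add: algebra_simps)
  show "C1 I (\<lambda>s t. f s t + g s t)"
    by (rule C1_intro[OF D1 D2], assumption, assumption,
       (intro continuous_on_add C1_cont[OF f] C1_cont[OF g]
          C1_cont_ds[OF f] C1_cont_ds[OF g] C1_cont_dt[OF f] C1_cont_dt[OF g])+)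
  show "t \<in> I \<Longrightarrow> ds (\<lambda>s t. f s t + g s t) s t = ds f s t + ds g s t"
    by (rule ds_eq) (rule D1)
  show "t \<in> I \<Longrightarrow> dt (\<lambda>s t. f s t + g s t) s t = dt f s t + dt g s t"
    by (rule dt_eq) (rule D2)
qed

lemma C1_diff:
  assumes f: "C1 I f" and g: "C1 I g"
  shows "C1 I (\<lambda>s t. f s t - g s t)"
    and "t \<in> I \<Longrightarrow> ds (\<lambda>s t. f s t - g s t) s t = ds f s t - ds g s t"
    and "t \<in> I \<Longrightarrow> dt (\<lambda>s t. f s t - g s t) s t = dt f s t - dt g s t"
proof -
  have D1: "((\<lambda>\<sigma>. f \<sigma> t - g \<sigma> t) has_real_derivative ds f s t - ds g s t) (at s)"
    if "t \<in> I" for s t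
    using DERIV_diff[OF C1_ds[OF f that] C1_ds[OF g that]] by (simp add: algebra_simps)
  have D2: "((\<lambda>\<tau>. f s \<tau> - g s \<tau>) has_real_derivative dt f s t - dt g s t) (at t)"
    if "t \<in> I" for s t
    using DERIV_diff[OF C1_dt[OF f that] C1_dt[OF g that]] by (simp add: algebra_simps)
  show "C1 I (\<lambda>s t. f s t - g s t)"
    by (rule C1_intro[OF D1 D2], assumption, assumption,
       (intro continuous_on_diff C1_cont[OF f] C1_cont[OF g]
          C1_cont_ds[OF f] C1_cont_ds[OF g] C1_cont_dt[OF f] C1_cont_dt[OF g])+)
  show "t \<in> I \<Longrightarrow> ds (\<lambda>s t. f s t - g s t) s t = ds f s t - ds g s t"
    by (rule ds_eq) (rule D1)
  show "t \<in> I \<Longrightarrow> dt (\<lambda>s t. f s t - g s t) s t = dt f s t - dt g s t"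
    by (rule dt_eq) (rule D2)
qed

lemma lin4:
  assumes "linear D"
  shows "D (x1,x2,x3,x4) = x1 * D eA + x2 * D eAt + x3 * D eAs + x4 * D eu"
proof -
  have "(x1,x2,x3,x4) = x1 *\<^sub>R eA + x2 *\<^sub>R eAt + x3 *\<^sub>R eAs + x4 *\<^sub>R eu" by simp
  then have "D (x1,x2,x3,x4) = D (x1 *\<^sub>R eA + x2 *\<^sub>R eAt + x3 *\<^sub>R eAs + x4 *\<^sub>R eu)"
    by (rule arg_cong)
  also have "\<dots> = x1 * D eA + x2 * D eAt + x3 * D eAs + x4 * D eu"
    by (simp only: linear_add[OF assms] linear_scale[OF assms] real_scaleR_def)
  finally show ?thesis .
qed

lemma chain4:
  fixes g :: "R4 \<Rightarrow> real"
  assumes g: "g differentiable (at (\<alpha> x, \<beta> x, \<gamma> x, \<delta> x))"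
    and a: "(\<alpha> has_real_derivative da) (at x)"
    and b: "(\<beta> has_real_derivative db) (at x)"
    and c: "(\<gamma> has_real_derivative dc) (at x)"
    and d: "(\<delta> has_real_derivative dd) (at x)"
  shows "((\<lambda>y. g (\<alpha> y, \<beta> y, \<gamma> y, \<delta> y)) has_real_derivative
     da * pdiff g eA (\<alpha> x, \<beta> x, \<gamma> x, \<delta> x) + db * pdiff g eAt (\<alpha> x, \<beta> x, \<gamma> x, \<delta> x)
     + dc * pdiff g eAs (\<alpha> x, \<beta> x, \<gamma> x, \<delta> x) + dd * pdiff g eu (\<alpha> x, \<beta> x, \<gamma> x, \<delta> x)) (at x)"
proof -
  let ?q = "(\<alpha> x, \<beta> x, \<gamma> x, \<delta> x)"
  let ?D = "frechet_derivative g (at ?q)"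
  have D: "(g has_derivative ?D) (at ?q)" using g frechet_derivative_works by blast
  have lin: "linear ?D" using has_derivative_linear[OF D] .
  have P: "((\<lambda>y. (\<alpha> y, \<beta> y, \<gamma> y, \<delta> y)) has_derivative
       (\<lambda>h. ((*) da h, (*) db h, (*) dc h, (*) dd h))) (at x)"
    using a b c d unfolding has_field_derivative_def
    by (intro has_derivative_Pair)
  have "((\<lambda>y. g (\<alpha> y, \<beta> y, \<gamma> y, \<delta> y)) has_derivative
       (\<lambda>h. ?D (da * h, db * h, dc * h, dd * h))) (at x)"
    using has_derivative_compose[OF P D] by simp
  moreover have "(\<lambda>h. ?D (da * h, db * h, dc * h, dd * h)) =
     (*) (da * pdiff g eA ?q + db * pdiff g eAt ?q + dc * pdiff g eAs ?q + dd * pdiff g eu ?q)"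
    by (rule ext) (subst lin4[OF lin], simp add: pdiff_def algebra_simps)
  ultimately show ?thesis by (simp add: has_field_derivative_def)
qed

lemma pdiff_dd: "pdiff g v = dirderivs [v] g"
  by (rule ext) (simp add: pdiff_def)

lemma C1_comp:
  fixes g :: "R4 \<Rightarrow> real"
  assumes g: "smooth_on U g"
    and a: "C1 I a" and b: "C1 I b" and c: "C1 I c" and d: "C1 I d"
    and inU: "\<And>s t. t \<in> I \<Longrightarrow> (a s t, b s t, c s t, d s t) \<in> U"
  shows "C1 I (\<lambda>s t. g (a s t, b s t, c s t, d s t))"
    and "t \<in> I \<Longrightarrow> ds (\<lambda>s t. g (a s t, b s t, c s t, d s t)) s t =
       ds a s t * pdiff g eA (a s t, b s t, c s t, d s t) + ds b s t * pdiff g eAt (a s t, b s t, c s t, d s t)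
     + ds c s t * pdiff g eAs (a s t, b s t, c s t, d s t) + ds d s t * pdiff g eu (a s t, b s t, c s t, d s t)"
    and "t \<in> I \<Longrightarrow> dt (\<lambda>s t. g (a s t, b s t, c s t, d s t)) s t =
       dt a s t * pdiff g eA (a s t, b s t, c s t, d s t) + dt b s t * pdiff g eAt (a s t, b s t, c s t, d s t)
     + dt c s t * pdiff g eAs (a s t, b s t, c s t, d s t) + dt d s t * pdiff g eu (a s t, b s t, c s t, d s t)"
proof -
  have D1: "((\<lambda>\<sigma>. g (a \<sigma> t, b \<sigma> t, c \<sigma> t, d \<sigma> t)) has_real_derivative
       ds a s t * pdiff g eA (a s t, b s t, c s t, d s t) + ds b s t * pdiff g eAt (a s t, b s t, c s t, d s t)
     + ds c s t * pdiff g eAs (a s t, b s t, c s t, d s t) + ds d s t * pdiff g eu (a s t, b s t, c s t, d s t)) (at s)"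
    if "t \<in> I" for s t
    using chain4[where \<alpha>="\<lambda>\<sigma>. a \<sigma> t" and \<beta>="\<lambda>\<sigma>. b \<sigma> t" and \<gamma>="\<lambda>\<sigma>. c \<sigma> t" and \<delta>="\<lambda>\<sigma>. d \<sigma> t",
       OF smooth_diff[OF g inU[OF that]] C1_ds[OF a that] C1_ds[OF b that] C1_ds[OF c that] C1_ds[OF d that]] .
  have D2: "((\<lambda>\<tau>. g (a s \<tau>, b s \<tau>, c s \<tau>, d s \<tau>)) has_real_derivative
       dt a s t * pdiff g eA (a s t, b s t, c s t, d s t) + dt b s t * pdiff g eAt (a s t, b s t, c s t, d s t)
     + dt c s t * pdiff g eAs (a s t, b s t, c s t, d s t) + dt d s t * pdiff g eu (a s t, b s t, c s t, d s t)) (at t)"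
    if "t \<in> I" for s t
    using chain4[where \<alpha>="\<lambda>\<tau>. a s \<tau>" and \<beta>="\<lambda>\<tau>. b s \<tau>" and \<gamma>="\<lambda>\<tau>. c s \<tau>" and \<delta>="\<lambda>\<tau>. d s \<tau>",
       OF smooth_diff[OF g inU[OF that]] C1_dt[OF a that] C1_dt[OF b that] C1_dt[OF c that] C1_dt[OF d that]] .
  let ?Q = "\<lambda>x. (a (fst x) (snd x), b (fst x) (snd x), c (fst x) (snd x), d (fst x) (snd x))"
  have Qc: "continuous_on (UNIV \<times> I) ?Q"
    by (intro continuous_on_Pair C1_cont[OF a] C1_cont[OF b] C1_cont[OF c] C1_cont[OF d])
  have Qi: "?Q ` (UNIV \<times> I) \<subseteq> U" using inU by auto
  have gc: "continuous_on (UNIV \<times> I) (\<lambda>x. g (?Q x))"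
    by (rule continuous_on_compose2[OF smooth_cont[OF g] Qc Qi])
  have pc: "continuous_on (UNIV \<times> I) (\<lambda>x. pdiff g v (?Q x))" for v
    unfolding pdiff_dd
    by (rule continuous_on_compose2[OF smooth_cont[OF smooth_dd[OF g]] Qc Qi])
  show "C1 I (\<lambda>s t. g (a s t, b s t, c s t, d s t))"
    by (rule C1_intro[OF D1 D2 gc], assumption, assumption,
       (intro continuous_on_add continuous_on_mult pc C1_cont_ds[OF a] C1_cont_ds[OF b]
          C1_cont_ds[OF c] C1_cont_ds[OF d] C1_cont_dt[OF a] C1_cont_dt[OF b]
          C1_cont_dt[OF c] C1_cont_dt[OF d])+)
  show "t \<in> I \<Longrightarrow> ds (\<lambda>s t. g (a s t, b s t, c s t, d s t)) s t =
       ds a s t * pdiff g eA (a s t, b s t, c s t, d s t) + ds b s t * pdiff g eAt (a s t, b s t, c s t, d s t)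
     + ds c s t * pdiff g eAs (a s t, b s t, c s t, d s t) + ds d s t * pdiff g eu (a s t, b s t, c s t, d s t)"
    by (rule ds_eq) (rule D1)
  show "t \<in> I \<Longrightarrow> dt (\<lambda>s t. g (a s t, b s t, c s t, d s t)) s t =
       dt a s t * pdiff g eA (a s t, b s t, c s t, d s t) + dt b s t * pdiff g eAt (a s t, b s t, c s t, d s t)
     + dt c s t * pdiff g eAs (a s t, b s t, c s t, d s t) + dt d s t * pdiff g eu (a s t, b s t, c s t, d s t)"
    by (rule dt_eq) (rule D2)
qed



lemma cont_slice_t: "continuous_on (UNIV \<times> I) (\<lambda>x. f (fst x) (snd x)) \<Longrightarrow> J \<subseteq> I \<Longrightarrow>
   continuous_on J (\<lambda>r. f \<sigma> r)"
proof -
  assume c: "continuous_on (UNIV \<times> I) (\<lambda>x. f (fst x) (snd x))" and J: "J \<subseteq> I"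
  have "continuous_on J (\<lambda>r. (\<sigma>, r))" by (intro continuous_intros)
  moreover have "(\<lambda>r. (\<sigma>, r)) ` J \<subseteq> UNIV \<times> I" using J by auto
  ultimately show ?thesis using continuous_on_compose2[OF c] by fastforce
qed

lemma cont_slice_s: "continuous_on (UNIV \<times> I) (\<lambda>x. f (fst x) (snd x)) \<Longrightarrow> t \<in> I \<Longrightarrow>
   continuous_on J (\<lambda>r. f r t)"
proof -
  assume c: "continuous_on (UNIV \<times> I) (\<lambda>x. f (fst x) (snd x))" and t: "t \<in> I"
  have "continuous_on J (\<lambda>r. (r, t))" by (intro continuous_intros)
  moreover have "(\<lambda>r. (r, t)) ` J \<subseteq> UNIV \<times> I" using t by auto
  ultimately show ?thesis using continuous_on_compose2[OF c] by fastforce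
qed

lemma mixed:
  assumes I: "open I" and f: "C1 I f" and fs: "C1 I (ds f)" and ft: "C1 I (dt f)" and t: "t \<in> I"
  shows "dt (ds f) s t = ds (dt f) s t"
proof -
  obtain e where e: "e > 0" "ball t e \<subseteq> I" using I t openE by blast
  define a where "a = t - e/2"
  define b where "b = t + e/2"
  have ab: "{a..b} \<subseteq> I"
  proof
    fix x assume "x \<in> {a..b}"
    then have "x \<in> ball t e" using e(1) by (auto simp: a_def b_def dist_real_def)
    then show "x \<in> I" using e(2) by blast
  qed
  have tab: "t \<in> {a<..<b}" using e(1) by (auto simp: a_def b_def)
  have key: "ds f s \<tau> - ds f s a = integral {a..\<tau>} (\<lambda>r. ds (dt f) s r)" if \<tau>: "\<tau> \<in> {a..b}" for \<tau>
  proof -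
    have sub: "{a..\<tau>} \<subseteq> I" using ab \<tau> by auto
    have phi: "integral {a..\<tau>} (\<lambda>r. dt f \<sigma> r) = f \<sigma> \<tau> - f \<sigma> a" for \<sigma>
    proof -
      have "((\<lambda>r. dt f \<sigma> r) has_integral (f \<sigma> \<tau> - f \<sigma> a)) {a..\<tau>}"
      proof (rule fundamental_theorem_of_calculus)
        show "a \<le> \<tau>" using \<tau> by simp
        fix x assume "x \<in> {a..\<tau>}"
        then have "x \<in> I" using sub by blast
        then show "((\<lambda>r. f \<sigma> r) has_vector_derivative dt f \<sigma> x) (at x within {a..\<tau>})"
          using C1_dt[OF f]
          by (auto simp: has_real_derivative_iff_has_vector_derivative[symmetric]
              intro: has_field_derivative_at_within)
      qed
      then show ?thesis by (rule integral_unique)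
    qed
    have L: "((\<lambda>\<sigma>. integral (cbox a \<tau>) (\<lambda>r. dt f \<sigma> r)) has_field_derivative
        integral (cbox a \<tau>) (\<lambda>r. ds (dt f) s r)) (at s within UNIV)"
    proof (rule leibniz_rule_field_derivative[where fx="\<lambda>\<sigma> r. ds (dt f) \<sigma> r"])
      fix x r assume "r \<in> cbox a \<tau>"
      then have "r \<in> I" using sub by auto
      then show "((\<lambda>x. dt f x r) has_field_derivative ds (dt f) x r) (at x within UNIV)"
        using C1_ds[OF ft] by blast
    next
      fix x :: real
      show "(\<lambda>r. dt f x r) integrable_on cbox a \<tau>"
        unfolding cbox_interval
        by (rule integrable_continuous_interval, rule cont_slice_t[OF C1_cont_dt[OF f] sub])
    next
      have "continuous_on (UNIV \<times> cbox a \<tau>) (\<lambda>x. ds (dt f) (fst x) (snd x))"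
        by (rule continuous_on_subset[OF C1_cont_ds[OF ft]]) (use sub in \<open>auto simp: cbox_interval\<close>)
      then show "continuous_on (UNIV \<times> cbox a \<tau>) (\<lambda>(x, r). ds (dt f) x r)"
        by (simp add: split_beta)
    qed auto
    have L2: "((\<lambda>\<sigma>. f \<sigma> \<tau> - f \<sigma> a) has_field_derivative
        integral {a..\<tau>} (\<lambda>r. ds (dt f) s r)) (at s)"
      using L unfolding cbox_interval phi by simp
    have L3: "((\<lambda>\<sigma>. f \<sigma> \<tau> - f \<sigma> a) has_field_derivative ds f s \<tau> - ds f s a) (at s)"
      using sub \<tau> by (intro DERIV_diff C1_ds[OF f]) auto
    show ?thesis using DERIV_unique[OF L3 L2] .
  qed
  have cg: "continuous_on {a..b} (\<lambda>r. ds (dt f) s r)"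
    by (rule cont_slice_t[OF C1_cont_ds[OF ft] ab])
  have "((\<lambda>x. integral {a..x} (\<lambda>r. ds (dt f) s r)) has_real_derivative ds (dt f) s t) (at t within {a..b})"
    using integral_has_real_derivative[OF cg] tab by auto
  then have "((\<lambda>x. integral {a..x} (\<lambda>r. ds (dt f) s r)) has_real_derivative ds (dt f) s t) (at t)"
    using at_within_interior[of t "{a..b}"] tab by simp
  then have "((\<lambda>x. ds f s a + integral {a..x} (\<lambda>r. ds (dt f) s r)) has_real_derivative ds (dt f) s t) (at t)"
    by (auto intro!: derivative_eq_intros)
  then have "((\<lambda>x. ds f s x) has_real_derivative ds (dt f) s t) (at t)"
  proof (rule has_field_derivative_transform_within_open[OF _ open_greaterThanLessThan tab])
    fix x assume "x \<in> {a<..<b}"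
    then have "x \<in> {a..b}" by auto
    from key[OF this] show "ds f s a + integral {a..x} (\<lambda>r. ds (dt f) s r) = ds f s x" by simp
  qed
  then show ?thesis using DERIV_unique C1_dt[OF fs t] by blast
qed

lemma per_ds:
  assumes f: "C1 I f" and t: "t \<in> I" and per: "\<And>s. f (s + L) t = f s t"
  shows "ds f (s + L) t = ds f s t"
proof -
  have "((\<lambda>\<sigma>. f \<sigma> t) has_real_derivative ds f (s + L) t) (at (s + L))" using C1_ds[OF f t] .
  then have "((\<lambda>\<sigma>. f (\<sigma> + L) t) has_real_derivative ds f (s + L) t) (at s)" by (simp add: DERIV_shift)
  then have "((\<lambda>\<sigma>. f \<sigma> t) has_real_derivative ds f (s + L) t) (at s)" using per by simp
  then show ?thesis by (rule ds_eq[symmetric])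
qed

lemma per_dt:
  assumes per: "\<And>\<tau>. f (s + L) \<tau> = f s \<tau>"
  shows "dt f (s + L) t = dt f s t"
proof -
  have "f (s + L) = f s" using per by (rule ext)
  then show ?thesis unfolding dt_def by simp
qed



lemma alg:
  fixes dLAt dLAs LA P pe dLu U dsLu Lu Us a ps At As Ats Ast LAt Att Ut LAs :: real
  assumes "dLAt + dLAs - LA = P - pe" "dLu + U * dsLu + 2 * Lu * Us = - a * ps"
    "At + (As * U + a * Us) = 0" "Ast = Ats"
  shows "(dLAt * At + LAt * Att + (dLu * U + Lu * Ut)) - (At * LA + Att * LAt + Ast * LAs + Ut * Lu)
      = - ((dLAs * At + LAs * Ats) + ((Us * U + U * Us) * Lu + U * U * dsLu)
           + ((ps - 0) * (a * U) + (P - pe) * (As * U + a * Us)))"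
proof -
  have 1: "dLAt = P - pe - dLAs + LA" using assms(1) by simp
  have 2: "dLu = - a * ps - U * dsLu - 2 * Lu * Us" using assms(2) by simp
  have 3: "At = - (As * U + a * Us)" using assms(3) by simp
  show ?thesis unfolding 1 2 3 assms(4) by (simp add: algebra_simps)
qed

lemma ds_const: "ds (\<lambda>s t. c) s t = 0"
  by (rule ds_eq) simp

theorem mainTheorem1:
  fixes L pext :: real
    and l :: "R4 \<Rightarrow> real"
    and U :: "R4 set"
    and I :: "real set"
    and A u p :: "real \<Rightarrow> real \<Rightarrow> real"
  assumes L_pos: "L > 0"
    and U_open: "open U"
    and l_smooth: "smooth_on U l"
    and I_open: "open I" and I_interval: "is_interval I"
    and A_smooth: "smooth_on (UNIV \<times> I) (\<lambda>(s, t). A s t)"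
    and u_smooth: "smooth_on (UNIV \<times> I) (\<lambda>(s, t). u s t)"
    and p_smooth: "smooth_on (UNIV \<times> I) (\<lambda>(s, t). p s t)"
    and A_per: "\<And>s t. A (s + L) t = A s t"
    and u_per: "\<And>s t. u (s + L) t = u s t"
    and p_per: "\<And>s t. p (s + L) t = p s t"
    and in_U: "\<And>s t. t \<in> I \<Longrightarrow> (A s t, dt A s t, ds A s t, u s t) \<in> U"
    and eq_u: "\<And>s t. t \<in> I \<Longrightarrow>
        dt (\<lambda>s t. pdiff l eu (A s t, dt A s t, ds A s t, u s t)) s t
        + u s t * ds (\<lambda>s t. pdiff l eu (A s t, dt A s t, ds A s t, u s t)) s t
        + 2 * pdiff l eu (A s t, dt A s t, ds A s t, u s t) * ds u s t
        = - A s t * ds p s t"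
    and eq_A: "\<And>s t. t \<in> I \<Longrightarrow>
        dt (\<lambda>s t. pdiff l eAt (A s t, dt A s t, ds A s t, u s t)) s t
        + ds (\<lambda>s t. pdiff l eAs (A s t, dt A s t, ds A s t, u s t)) s t
        - pdiff l eA (A s t, dt A s t, ds A s t, u s t)
        = p s t - pext"
    and eq_mass: "\<And>s t. t \<in> I \<Longrightarrow> dt A s t + ds (\<lambda>s t. A s t * u s t) s t = 0"
  shows "\<forall>t1\<in>I. \<forall>t2\<in>I.
     integral {0..L} (\<lambda>s. pdiff l eAt (A s t1, dt A s t1, ds A s t1, u s t1) * dt A s t1
        + pdiff l eu (A s t1, dt A s t1, ds A s t1, u s t1) * u s t1
        - l (A s t1, dt A s t1, ds A s t1, u s t1))
   = integral {0..L} (\<lambda>s. pdiff l eAt (A s t2, dt A s t2, ds A s t2, u s t2) * dt A s t2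
        + pdiff l eu (A s t2, dt A s t2, ds A s t2, u s t2) * u s t2
        - l (A s t2, dt A s t2, ds A s t2, u s t2))"
proof -
  have cA: "C1 I A" and dtA: "\<And>s t. t \<in> I \<Longrightarrow> dt A s t = dirderivs [(0,1)] (\<lambda>(s, t). A s t) (s,t)"
      and dsA: "\<And>s t. t \<in> I \<Longrightarrow> ds A s t = dirderivs [(1,0)] (\<lambda>(s, t). A s t) (s,t)"
    using C1_of_smooth[OF A_smooth I_open, of A] by auto
  have cAt: "C1 I (dt A)" by (rule C1_of_smooth(1)[OF smooth_dd[OF A_smooth] I_open]) (rule dtA)
  have cAs: "C1 I (ds A)" by (rule C1_of_smooth(1)[OF smooth_dd[OF A_smooth] I_open]) (rule dsA)
  have cu: "C1 I u" using C1_of_smooth(1)[OF u_smooth I_open, of u] by auto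
  have cp: "C1 I p" using C1_of_smooth(1)[OF p_smooth I_open, of p] by auto
  have sl: "smooth_on U (pdiff l v)" for v unfolding pdiff_dd by (rule smooth_dd[OF l_smooth])
  note comp = C1_comp[OF _ cA cAt cAs cu in_U]
  have cLv: "C1 I (\<lambda>s t. l (A s t, dt A s t, ds A s t, u s t))" by (rule comp(1)[OF l_smooth])
  have cLAt: "C1 I (\<lambda>s t. pdiff l eAt (A s t, dt A s t, ds A s t, u s t))" by (rule comp(1)[OF sl])
  have cLAs: "C1 I (\<lambda>s t. pdiff l eAs (A s t, dt A s t, ds A s t, u s t))" by (rule comp(1)[OF sl])
  have cLu: "C1 I (\<lambda>s t. pdiff l eu (A s t, dt A s t, ds A s t, u s t))" by (rule comp(1)[OF sl])
  define e where "e = (\<lambda>s t. pdiff l eAt (A s t, dt A s t, ds A s t, u s t) * dt A s t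
        + pdiff l eu (A s t, dt A s t, ds A s t, u s t) * u s t
        - l (A s t, dt A s t, ds A s t, u s t))"
  define G where "G = (\<lambda>s t. pdiff l eAs (A s t, dt A s t, ds A s t, u s t) * dt A s t
        + u s t * u s t * pdiff l eu (A s t, dt A s t, ds A s t, u s t)
        + (p s t - pext) * (A s t * u s t))"
  have c1: "C1 I (\<lambda>s t. pdiff l eAt (A s t, dt A s t, ds A s t, u s t) * dt A s t)"
    by (rule C1_mult(1)[OF cLAt cAt])
  have c2: "C1 I (\<lambda>s t. pdiff l eu (A s t, dt A s t, ds A s t, u s t) * u s t)"
    by (rule C1_mult(1)[OF cLu cu])
  have c12: "C1 I (\<lambda>s t. pdiff l eAt (A s t, dt A s t, ds A s t, u s t) * dt A s t
        + pdiff l eu (A s t, dt A s t, ds A s t, u s t) * u s t)"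
    by (rule C1_add(1)[OF c1 c2])
  have ce: "C1 I e" unfolding e_def by (rule C1_diff(1)[OF c12 cLv])
  have g1: "C1 I (\<lambda>s t. pdiff l eAs (A s t, dt A s t, ds A s t, u s t) * dt A s t)"
    by (rule C1_mult(1)[OF cLAs cAt])
  have cuu: "C1 I (\<lambda>s t. u s t * u s t)" by (rule C1_mult(1)[OF cu cu])
  have g2: "C1 I (\<lambda>s t. u s t * u s t * pdiff l eu (A s t, dt A s t, ds A s t, u s t))"
    by (rule C1_mult(1)[OF cuu cLu])
  have cpe: "C1 I (\<lambda>s t. p s t - pext)" by (rule C1_diff(1)[OF cp C1_const])
  have cAu: "C1 I (\<lambda>s t. A s t * u s t)" by (rule C1_mult(1)[OF cA cu])
  have g3: "C1 I (\<lambda>s t. (p s t - pext) * (A s t * u s t))" by (rule C1_mult(1)[OF cpe cAu])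
  have g12: "C1 I (\<lambda>s t. pdiff l eAs (A s t, dt A s t, ds A s t, u s t) * dt A s t
        + u s t * u s t * pdiff l eu (A s t, dt A s t, ds A s t, u s t))"
    by (rule C1_add(1)[OF g1 g2])
  have cG: "C1 I G" unfolding G_def by (rule C1_add(1)[OF g12 g3])
  have pointwise: "dt e s t = - ds G s t" if t: "t \<in> I" for s t
  proof -
    have de: "dt e s t =
       (dt (\<lambda>s t. pdiff l eAt (A s t, dt A s t, ds A s t, u s t)) s t * dt A s t
         + pdiff l eAt (A s t, dt A s t, ds A s t, u s t) * dt (dt A) s t
         + (dt (\<lambda>s t. pdiff l eu (A s t, dt A s t, ds A s t, u s t)) s t * u s t
         + pdiff l eu (A s t, dt A s t, ds A s t, u s t) * dt u s t))
      - (dt A s t * pdiff l eA (A s t, dt A s t, ds A s t, u s t)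
         + dt (dt A) s t * pdiff l eAt (A s t, dt A s t, ds A s t, u s t)
         + dt (ds A) s t * pdiff l eAs (A s t, dt A s t, ds A s t, u s t)
         + dt u s t * pdiff l eu (A s t, dt A s t, ds A s t, u s t))"
      unfolding e_def
      by (simp only: C1_diff(3)[OF c12 cLv t] C1_add(3)[OF c1 c2 t] C1_mult(3)[OF cLAt cAt t]
          C1_mult(3)[OF cLu cu t] C1_comp(3)[OF l_smooth cA cAt cAs cu in_U t])
    have dG: "ds G s t =
       (ds (\<lambda>s t. pdiff l eAs (A s t, dt A s t, ds A s t, u s t)) s t * dt A s t
         + pdiff l eAs (A s t, dt A s t, ds A s t, u s t) * ds (dt A) s t)
       + ((ds u s t * u s t + u s t * ds u s t) * pdiff l eu (A s t, dt A s t, ds A s t, u s t)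
         + u s t * u s t * ds (\<lambda>s t. pdiff l eu (A s t, dt A s t, ds A s t, u s t)) s t)
       + ((ds p s t - 0) * (A s t * u s t) + (p s t - pext) * (ds A s t * u s t + A s t * ds u s t))"
      unfolding G_def
      by (simp only: C1_add(2)[OF g12 g3 t] C1_add(2)[OF g1 g2 t] C1_mult(2)[OF cLAs cAt t]
          C1_mult(2)[OF cuu cLu t] C1_mult(2)[OF cu cu t] C1_mult(2)[OF cpe cAu t]
          C1_diff(2)[OF cp C1_const t] ds_const C1_mult(2)[OF cA cu t])
    have mass: "dt A s t + (ds A s t * u s t + A s t * ds u s t) = 0"
      using eq_mass[OF t, of s] C1_mult(2)[OF cA cu t] by simp
    have mix: "dt (ds A) s t = ds (dt A) s t" by (rule mixed[OF I_open cA cAs cAt t])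
    show ?thesis unfolding de dG by (rule alg[OF eq_A[OF t] eq_u[OF t] mass mix])
  qed
  have Eder: "((\<lambda>x. integral {0..L} (\<lambda>r. e r x)) has_field_derivative integral {0..L} (\<lambda>r. dt e r t0))
      (at t0 within I)" if t0: "t0 \<in> I" for t0
  proof -
    have "((\<lambda>x. integral (cbox 0 L) (\<lambda>r. e r x)) has_field_derivative integral (cbox 0 L) (\<lambda>r. dt e r t0))
      (at t0 within I)"
    proof (rule leibniz_rule_field_derivative[where fx="\<lambda>x r. dt e r x"])
      fix x r assume "x \<in> I" "r \<in> cbox 0 L"
      then show "((\<lambda>x. e r x) has_field_derivative dt e r x) (at x within I)"
        using C1_dt[OF ce] by (blast intro: has_field_derivative_at_within)
    next
      fix x assume "x \<in> I"
      then show "(\<lambda>r. e r x) integrable_on cbox 0 L"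
        unfolding cbox_interval
        by (intro integrable_continuous_interval cont_slice_s[OF C1_cont[OF ce]])
    next
      have "continuous_on (I \<times> cbox 0 L) (\<lambda>y. dt e (fst (snd y, fst y)) (snd (snd y, fst y)))"
        by (rule continuous_on_compose2[OF C1_cont_dt[OF ce]]) (auto intro!: continuous_intros)
      then show "continuous_on (I \<times> cbox 0 L) (\<lambda>(x, r). dt e r x)"
        by (simp add: split_beta)
    next
      show "t0 \<in> I" by (rule t0)
      show "convex I" using I_interval is_interval_convex_1 by blast
    qed
    then show ?thesis unfolding cbox_interval .
  qed
  have int0: "integral {0..L} (\<lambda>r. dt e r t0) = 0" if t0: "t0 \<in> I" for t0
  proof -
    have ftc: "((\<lambda>r. ds G r t0) has_integral (G L t0 - G 0 t0)) {0..L}"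
    proof (rule fundamental_theorem_of_calculus)
      show "0 \<le> L" using L_pos by simp
      fix x assume "x \<in> {0..L}"
      show "((\<lambda>r. G r t0) has_vector_derivative ds G x t0) (at x within {0..L})"
        using C1_ds[OF cG t0]
        by (auto simp: has_real_derivative_iff_has_vector_derivative[symmetric]
            intro: has_field_derivative_at_within)
    qed
    have pA: "A L t0 = A 0 t0" using A_per[of 0 t0] by simp
    have pu: "u L t0 = u 0 t0" using u_per[of 0 t0] by simp
    have pp: "p L t0 = p 0 t0" using p_per[of 0 t0] by simp
    have pAt: "dt A L t0 = dt A 0 t0" using per_dt[of A 0 L t0] A_per[of 0] by simp
    have pAs: "ds A L t0 = ds A 0 t0" using per_ds[OF cA t0, of L 0] A_per by simp
    have GL: "G L t0 = G 0 t0" unfolding G_def by (simp only: pA pu pp pAt pAs)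
    have "((\<lambda>r. dt e r t0) has_integral 0) {0..L}"
      using has_integral_neg[OF ftc] pointwise[OF t0] GL by simp
    then show ?thesis by (rule integral_unique)
  qed
  obtain c where c: "\<forall>x\<in>I. integral {0..L} (\<lambda>r. e r x) = c"
  proof -
    have "\<exists>c. \<forall>x\<in>I. integral {0..L} (\<lambda>r. e r x) = c"
    proof (rule has_field_derivative_zero_constant)
      show "convex I" using I_interval is_interval_convex_1 by blast
      fix x assume "x \<in> I"
      then show "((\<lambda>x. integral {0..L} (\<lambda>r. e r x)) has_field_derivative 0) (at x within I)"
        using Eder int0 by metis
    qed
    then show ?thesis using that by blast
  qed
  show ?thesis using c unfolding e_def by simp
qed


end
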